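(* In the Setting below and under the Standing Assumption, let $x\in\mathbb{Q}\cap D$ be such that the Lyapunov exponent $\lambda(x)$ exists. Then for every $\varepsilon>0$ there exists $p_0\in\mathbb{Z}$ such that for all $p\ge p_0$, $$\sigma(x,p)\le\frac{1}{\ln 2}\max(0,\bar\lambda(x))+\varepsilon.$$
   Context: Setting. $D\subseteq\mathbb{R}$ is a compact interval and $f:D\to D$ is twice continuously differentiable on $D$ with $f''$ bounded. For $x\in D$ the orbit is $x_0=x$, $x_{n+1}=f(x_n)$. A floating-point number of precision $m$ is a real $s\cdot 2^{e-m}$ with $s,e\in\mathbb{Z}$, $|s|\le 2^m-1$; $rd_m(y)$ denotes rounding of $y$ to a nearest floating-point number of precision $m$. Let $L(a,e):=\sup\{|f'(y)|: y\in[a-e,a+e]\cap D\}$ and fix a function $\bar L$ with $L(a,e)\le\bar L(a,e)\le\min(\bar L_{max},\,L(a,e)+Ke)$ for constants $\bar L_{max},K\ge0$. For $x\in\mathbb{Q}\cap D$ and precision $m\ge1$ the computed sequence is $\hat x_0=rd_m(x)$, $\bar e_0=2^{-m}|\hat x_0|$, $\hat x_{n+1}=rd_m(f(\hat x_n))$, $\bar e_{n+1}=\bar L(\hat x_n,\bar e_n)\bar e_n+2^{-m}|\hat x_{n+1}|$ (all $\hat x_n$ assumed in $D$). For $N\in\mathbb{N}$, $p\in\mathbb{Z}$, $m_{min}(x,N,p)$ is the least $m\ge1$ such that the sequence computed at precision $m$ satisfies $\bar e_n\le\frac{10^{-p}}{1+10^{-p}}|\hat x_n|$ for all $n=0,\dots,N$.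 $\sigma(x,p):=\limsup_{N\to\infty} m_{min}(x,N,p)/N$. Standing Assumption: $x_n\ne0$ for all $n$ and $\lim_{N\to\infty}\mathrm{ld}(\min\{|x_n|:0\le n\le N\})/N=0$, $\mathrm{ld}=\log_2$. Lyapunov exponent: $\lambda(x):=\lim_{n\to\infty}\frac1n\sum_{k=0}^{n-1}\ln|f'(f^k(x))|$ when it exists. For $\alpha>0$, $\eta_\alpha(y)=\ln y$ if $y\ge\alpha$, $\eta_\alpha(y)=\ln\alpha$ if $0\le y<\alpha$; $\bar\lambda_\alpha(x):=\limsup_{n\to\infty}\frac1n\sum_{k=0}^{n-1}\eta_\alpha(|f'(f^k(x))|)$ and $\bar\lambda(x):=\lim_{\alpha\to0^+}\bar\lambda_\alpha(x)$. *)

theory Defs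
  imports "HOL-Analysis.Analysis" "HOL-Library.Liminf_Limsup"
begin

definition is_float :: "nat \<Rightarrow> real \<Rightarrow> bool" where
  "is_float m y \<longleftrightarrow> (\<exists>s e :: int. \<bar>s\<bar> \<le> 2 ^ m - 1 \<and>
      y = real_of_int s * 2 powr (real_of_int e - real m))"

definition is_round_nearest :: "(nat \<Rightarrow> real \<Rightarrow> real) \<Rightarrow> bool" where
  "is_round_nearest rd \<longleftrightarrow> (\<forall>m\<ge>1. \<forall>y. is_float m (rd m y) \<and>
      (\<forall>z. is_float m z \<longrightarrow> \<bar>rd m y - y\<bar> \<le> \<bar>z - y\<bar>))"

definition Lloc :: "(real \<Rightarrow> real) \<Rightarrow> real set \<Rightarrow> real \<Rightarrow> real \<Rightarrow> real" where
  "Lloc f' D a e = Sup ((\<lambda>y. \<bar>f' y\<bar>) ` ({a - e .. a + e} \<inter> D))"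

text \<open>Computed sequence (xhat n, ebar n) at precision m.\<close>
primrec comp_seq :: "(nat \<Rightarrow> real \<Rightarrow> real) \<Rightarrow> (real \<Rightarrow> real) \<Rightarrow> (real \<Rightarrow> real \<Rightarrow> real)
     \<Rightarrow> nat \<Rightarrow> real \<Rightarrow> nat \<Rightarrow> real \<times> real" where
  "comp_seq rd f Lb m x 0 = (rd m x, inverse (2 ^ m) * \<bar>rd m x\<bar>)"
| "comp_seq rd f Lb m x (Suc n) =
     (let xh = fst (comp_seq rd f Lb m x n); e = snd (comp_seq rd f Lb m x n);
          xh' = rd m (f xh)
      in (xh', Lb xh e * e + inverse (2 ^ m) * \<bar>xh'\<bar>))"

definition m_min :: "(nat \<Rightarrow> real \<Rightarrow> real) \<Rightarrow> (real \<Rightarrow> real) \<Rightarrow> (real \<Rightarrow> real \<Rightarrow> real)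
     \<Rightarrow> real \<Rightarrow> nat \<Rightarrow> int \<Rightarrow> nat" where
  "m_min rd f Lb x N p = (LEAST m. m \<ge> 1 \<and> (\<forall>n\<le>N.
      snd (comp_seq rd f Lb m x n) \<le>
        10 powr (- real_of_int p) / (1 + 10 powr (- real_of_int p)) * \<bar>fst (comp_seq rd f Lb m x n)\<bar>))"

definition sigma :: "(nat \<Rightarrow> real \<Rightarrow> real) \<Rightarrow> (real \<Rightarrow> real) \<Rightarrow> (real \<Rightarrow> real \<Rightarrow> real)
     \<Rightarrow> real \<Rightarrow> int \<Rightarrow> ereal" where
  "sigma rd f Lb x p = limsup (\<lambda>N. ereal (real (m_min rd f Lb x N p) / real N))"

definition eta :: "real \<Rightarrow> real \<Rightarrow> real" where
  "eta \<alpha> y = (if y \<ge> \<alpha> then ln y else ln \<alpha>)"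

definition lambda_bar_alpha :: "(real \<Rightarrow> real) \<Rightarrow> (real \<Rightarrow> real) \<Rightarrow> real \<Rightarrow> real \<Rightarrow> ereal" where
  "lambda_bar_alpha f f' x \<alpha> =
     limsup (\<lambda>n. ereal ((1 / real n) * (\<Sum>k<n. eta \<alpha> \<bar>f' ((f ^^ k) x)\<bar>)))"

definition lambda_bar :: "(real \<Rightarrow> real) \<Rightarrow> (real \<Rightarrow> real) \<Rightarrow> real \<Rightarrow> ereal" where
  "lambda_bar f f' x = Lim (at_right 0) (\<lambda>\<alpha>. lambda_bar_alpha f f' x \<alpha>)"

text \<open>The Lyapunov exponent exists (as a real number): all logarithms are defined and the averages converge.\<close>
definition lyapunov_exists :: "(real \<Rightarrow> real) \<Rightarrow> (real \<Rightarrow> real) \<Rightarrow> real \<Rightarrow> bool" where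
  "lyapunov_exists f f' x \<longleftrightarrow> (\<forall>k. f' ((f ^^ k) x) \<noteq> 0) \<and>
     (\<exists>l. (\<lambda>n. (1 / real n) * (\<Sum>k<n. ln \<bar>f' ((f ^^ k) x)\<bar>)) \<longlonglongrightarrow> l)"

end

theory Submission
  imports Defs
begin


lemma float_pow2:
  assumes m: "m \<ge> 1" and that: "\<bar>s\<bar> \<le> 1"
  shows "is_float m (of_int s * 2 powr (of_int k))"
proof -
  have "\<bar>s * 2^(m-1)\<bar> \<le> 2^m - 1"
  proof -
    have "\<bar>s * 2^(m-1)\<bar> \<le> 2^(m-1)" using that by (simp add: abs_mult)
    also have "(2::int)^(m-1) \<le> 2^m - 1" using m
    proof -
      obtain j where "m = Suc j" using m by (cases m) auto
      then show ?thesis by simp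
    qed
    finally show ?thesis .
  qed
  moreover have "of_int s * 2 powr (of_int k) = real_of_int (s * 2^(m-1)) * 2 powr (real_of_int (k+1) - real m)"
  proof -
    have e: "(2::real)^(m-1) = 2 powr (real m - 1)"
      using m by (simp add: powr_realpow[symmetric] of_nat_diff)
    have "2 powr (real_of_int (k+1) - real m) * 2^(m-1) = 2 powr (real_of_int (k+1) - real m + (real m - 1))"
      unfolding e by (simp add: powr_add[symmetric])
    then have "2 powr (real_of_int (k+1) - real m) * 2^(m-1) = 2 powr (of_int k)" by simp
    then show ?thesis by (simp add: algebra_simps)
  qed
  ultimately show ?thesis unfolding is_float_def by blast
qed

lemma round_err:
  assumes rd: "is_round_nearest rd" and m: "m \<ge> 1"
  shows "\<bar>rd m y - y\<bar> \<le> inverse (2^m) * \<bar>rd m y\<bar>"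
proof -
  have F: "is_float m (rd m y)" and N: "\<And>z. is_float m z \<Longrightarrow> \<bar>rd m y - y\<bar> \<le> \<bar>z - y\<bar>"
    using rd m unfolding is_round_nearest_def by auto
  show ?thesis
  proof (cases "y = 0")
    case True
    have "is_float m 0" unfolding is_float_def by (rule exI[of _ 0]) simp
    from N[OF this] True show ?thesis by simp
  next
    case False
    define k where "k = \<lfloor>log 2 \<bar>y\<bar>\<rfloor> + 1"
    have ay: "\<bar>y\<bar> > 0" using False by simp
    have lo: "2 powr (of_int (k-1)) \<le> \<bar>y\<bar>"
    proof -
      have "2 powr (of_int (k-1)) \<le> 2 powr (log 2 \<bar>y\<bar>)"
        unfolding k_def by (intro powr_mono) auto
      then show ?thesis using ay by simp
    qed
    have hi: "\<bar>y\<bar> < 2 powr (of_int k)"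
    proof -
      have "log 2 \<bar>y\<bar> < of_int k" unfolding k_def by linarith
      then have "2 powr (log 2 \<bar>y\<bar>) < 2 powr (of_int k)" by (intro powr_less_mono) auto
      then show ?thesis using ay by simp
    qed
    define H where "H = 2 powr (of_int k - real m)"
    have Hp: "H > 0" unfolding H_def by simp
    have Hk: "2 powr (of_int k) = H * 2^m"
    proof -
      have e: "(2::real)^m = 2 powr real m" by (simp add: powr_realpow)
      have "H * 2^m = 2 powr (of_int k - real m + real m)"
        unfolding H_def e by (simp add: powr_add[symmetric])
      then show ?thesis by simp
    qed
    have Hk1: "2 powr (of_int (k-1)) = H * 2^m / 2"
    proof -
      have "2 powr (real_of_int (k-1)) = (2::real) powr (real_of_int k) / 2"
        by (simp add: powr_diff)
      then show ?thesis using Hk by simp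
    qed
    define s0 where "s0 = round (y / H)"
    have r: "\<bar>of_int s0 - y / H\<bar> \<le> 1/2" unfolding s0_def by (rule of_int_round_abs_le)
    have yH: "\<bar>y / H\<bar> < 2^m" using hi Hk Hp by (simp add: divide_less_eq abs_divide mult.commute)
    have "\<bar>real_of_int s0\<bar> < 2^m + 1" using r yH by linarith
    then have s0b: "\<bar>s0\<bar> \<le> 2^m"
      by (metis (mono_tags, opaque_lifting) of_int_1 of_int_abs of_int_add of_int_less_iff of_int_numeral of_int_power zle_add1_eq_le)
    define w where "w = of_int s0 * H"
    have wy: "\<bar>w - y\<bar> \<le> H / 2"
    proof -
      have "w - y = H * (of_int s0 - y / H)" unfolding w_def using Hp by (simp add: field_simps)
      then have "\<bar>w - y\<bar> = H * \<bar>of_int s0 - y / H\<bar>" using Hp by (simp add: abs_mult)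
      also have "\<dots> \<le> H * (1/2)" using r Hp by (intro mult_left_mono) auto
      finally show ?thesis by simp
    qed
    have wf: "is_float m w"
    proof (cases "\<bar>s0\<bar> \<le> 2^m - 1")
      case True
      then show ?thesis unfolding is_float_def w_def H_def by blast
    next
      case False
      with s0b have "\<bar>s0\<bar> = 2^m" by linarith
      then have "real_of_int s0 = of_int (sgn s0) * 2^m"
      proof (cases "s0 \<ge> 0")
        case True
        then have "s0 = 2^m" using \<open>\<bar>s0\<bar> = 2^m\<close> by simp
        then show ?thesis by simp
      next
        case False
        then have "s0 = -(2^m)" using \<open>\<bar>s0\<bar> = 2^m\<close> by simp
        then show ?thesis by simp
      qed
      then have "w = of_int (sgn s0) * 2 powr (of_int k)"
        unfolding w_def Hk by simp
      moreover have "\<bar>sgn s0\<bar> \<le> 1" by (simp add: abs_sgn_eq)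
      ultimately show ?thesis using float_pow2[OF m] by simp
    qed
    define v where "v = (if y > 0 then 1 else -1::int)"
    have vf: "is_float m (of_int v * 2 powr (of_int (k-1)))"
      by (rule float_pow2[OF m]) (simp add: v_def)
    have "\<bar>of_int v * 2 powr (of_int (k-1)) - y\<bar> = \<bar>y\<bar> - 2 powr (of_int (k-1))"
      using lo by (auto simp: v_def abs_if)
    with N[OF vf] have "\<bar>rd m y - y\<bar> \<le> \<bar>y\<bar> - 2 powr (of_int (k-1))" by simp
    then have big: "\<bar>rd m y\<bar> \<ge> 2 powr (of_int (k-1))" by linarith
    have "\<bar>rd m y - y\<bar> \<le> H / 2" using N[OF wf] wy by linarith
    also have "H / 2 = inverse (2^m) * 2 powr (of_int (k-1))" using Hk1 by (simp add: field_simps)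
    also have "\<dots> \<le> inverse (2^m) * \<bar>rd m y\<bar>" using big by (intro mult_left_mono) auto
    finally show ?thesis .
  qed
qed




lemma ev_lin_exp:
  fixes c1 c2 :: real assumes c2: "c2 > 0"
  shows "eventually (\<lambda>N. c1 * (real N + 1) \<le> exp (c2 * real N)) sequentially"
proof -
  define N0 where "N0 = nat \<lceil>8 * \<bar>c1\<bar> / c2^2\<rceil> + 1"
  have "c1 * (real N + 1) \<le> exp (c2 * real N)" if N: "N \<ge> N0" for N
  proof -
    have N1: "real N \<ge> 1" using N unfolding N0_def by simp
    have N2: "real N \<ge> 8 * \<bar>c1\<bar> / c2^2" using N unfolding N0_def by linarith
    have "c1 * (real N + 1) \<le> \<bar>c1\<bar> * (real N + 1)" by (intro mult_right_mono) auto
    also have "\<dots> \<le> \<bar>c1\<bar> * (2 * real N)" using N1 by (intro mult_left_mono) auto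
    also have "\<dots> = (8 * \<bar>c1\<bar> / c2^2) * real N * (c2^2 / 4)" using c2 by (simp add: field_simps)
    also have "\<dots> \<le> real N * real N * (c2^2/4)" using N2 N1 by (intro mult_right_mono mult_right_mono) auto
    also have "\<dots> = (c2 * real N / 2)^2" by (simp add: power2_eq_square field_simps)
    also have "\<dots> \<le> (exp (c2 * real N / 2))^2"
    proof -
      have "c2 * real N / 2 \<le> exp (c2 * real N / 2)"
        using exp_ge_add_one_self[of "c2 * real N / 2"] by linarith
      moreover have "0 \<le> c2 * real N / 2" using c2 by simp
      ultimately show ?thesis by (intro power_mono) auto
    qed
    also have "\<dots> = exp (c2 * real N)" by (simp add: power2_eq_square exp_add[symmetric])
    finally show ?thesis .
  qed
  then show ?thesis unfolding eventually_sequentially by blast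
qed

lemma ev_bound_const:
  fixes u v :: "nat \<Rightarrow> real"
  assumes "eventually (\<lambda>n. u n \<le> v n) sequentially"
  shows "\<exists>K\<ge>0. \<forall>n. u n \<le> v n + K"
proof -
  obtain n0 where n0: "\<And>n. n \<ge> n0 \<Longrightarrow> u n \<le> v n" using assms unfolding eventually_sequentially by blast
  define K where "K = (\<Sum>i<n0. \<bar>u i - v i\<bar>)"
  have "u n \<le> v n + K" for n
  proof (cases "n \<ge> n0")
    case True then show ?thesis using n0[OF True] unfolding K_def by (smt (verit) sum_nonneg abs_ge_zero)
  next
    case False
    then have "\<bar>u n - v n\<bar> \<le> K" unfolding K_def
      by (intro member_le_sum) auto
    then show ?thesis by linarith
  qed
  moreover have "K \<ge> 0" unfolding K_def by (intro sum_nonneg) auto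
  ultimately show ?thesis by blast
qed

lemma lin_rec:
  fixes E g :: "nat \<Rightarrow> real" and c :: real
  assumes rec: "\<forall>j<n. E (Suc j) \<le> g j * E j + c" and E0: "E 0 \<le> c"
    and g: "\<forall>j. g j \<ge> 0" and c: "c \<ge> 0"
  shows "E n \<le> c * (\<Sum>k\<le>n. \<Prod>j\<in>{k..<n}. g j)"
  using rec
proof (induction n)
  case 0 then show ?case using E0 by simp
next
  case (Suc n)
  have IH: "E n \<le> c * (\<Sum>k\<le>n. \<Prod>j\<in>{k..<n}. g j)" using Suc by simp
  have "E (Suc n) \<le> g n * E n + c" using Suc.prems by simp
  also have "\<dots> \<le> g n * (c * (\<Sum>k\<le>n. \<Prod>j\<in>{k..<n}. g j)) + c"
    using IH g by (intro add_right_mono mult_left_mono) auto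
  also have "\<dots> = c * ((\<Sum>k\<le>n. (\<Prod>j\<in>{k..<n}. g j) * g n) + 1)"
    by (simp add: sum_distrib_left sum_distrib_right algebra_simps)
  also have "(\<Sum>k\<le>n. (\<Prod>j\<in>{k..<n}. g j) * g n) = (\<Sum>k\<le>n. \<Prod>j\<in>{k..<Suc n}. g j)"
    by (intro sum.cong refl) (simp add: prod.atLeastLessThan_Suc)
  also have "(\<Sum>k\<le>n. \<Prod>j\<in>{k..<Suc n}. g j) + 1 = (\<Sum>k\<le>Suc n. \<Prod>j\<in>{k..<Suc n}. g j)"
    by simp
  finally show ?case .
qed

lemma prod_le_exp:
  fixes g h :: "nat \<Rightarrow> real"
  assumes "\<forall>j. 0 \<le> g j \<and> g j \<le> h j" and "\<forall>j. h j > 0"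
  shows "(\<Prod>j\<in>A. g j) \<le> exp (\<Sum>j\<in>A. ln (h j))"
proof -
  have "(\<Prod>j\<in>A. g j) \<le> (\<Prod>j\<in>A. h j)" using assms by (intro prod_mono) auto
  also have "\<dots> = (\<Prod>j\<in>A. exp (ln (h j)))" using assms by simp
  also have "\<dots> = exp (\<Sum>j\<in>A. ln (h j))" by (cases "finite A") (simp_all add: exp_sum)
  finally show ?thesis .
qed

lemma sum_ivl_diff:
  fixes F :: "nat \<Rightarrow> real"
  assumes "k \<le> n"
  shows "(\<Sum>j\<in>{k..<n}. F j) = (\<Sum>j<n. F j) - (\<Sum>j<k. F j)"
proof -
  have "{..<n} = {..<k} \<union> {k..<n}" using assms by auto
  moreover have "{..<k} \<inter> {k..<n} = {}" by auto
  ultimately have "(\<Sum>j<n. F j) = (\<Sum>j<k. F j) + (\<Sum>j\<in>{k..<n}. F j)"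
    by (simp add: sum.union_disjoint)
  then show ?thesis by simp
qed

lemma sum_exp_bound:
  fixes P :: "nat \<Rightarrow> real"
  assumes "\<forall>k\<le>n. P k \<le> B"
  shows "(\<Sum>k\<le>n. exp (P k)) \<le> (real n + 1) * exp B"
proof -
  have "(\<Sum>k\<le>n. exp (P k)) \<le> (\<Sum>k\<le>n. exp B)" using assms by (intro sum_mono) auto
  then show ?thesis by (simp add: add.commute)
qed




locale setting =
  fixes a b :: real and f f' f'' :: "real \<Rightarrow> real"
    and rd :: "nat \<Rightarrow> real \<Rightarrow> real" and Lb :: "real \<Rightarrow> real \<Rightarrow> real"
    and Lmax K x :: real
  assumes ab: "a < b"
    and maps: "\<forall>y\<in>{a..b}. f y \<in> {a..b}"
    and d1: "\<forall>y\<in>{a..b}. (f has_real_derivative f' y) (at y within {a..b})"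
    and d2: "\<forall>y\<in>{a..b}. (f' has_real_derivative f'' y) (at y within {a..b})"
    and d2bdd: "bounded (f'' ` {a..b})"
    and rd: "is_round_nearest rd"
    and K: "K \<ge> 0"
    and Lb: "\<forall>c\<in>{a..b}. \<forall>e\<ge>0. Lloc f' {a..b} c e \<le> Lb c e \<and>
               Lb c e \<le> min Lmax (Lloc f' {a..b} c e + K * e)"
    and xD: "x \<in> {a..b}"
    and inD: "\<forall>m\<ge>1. \<forall>n. fst (comp_seq rd f Lb m x n) \<in> {a..b}"
begin

definition M2 where "M2 = (SOME M. M \<ge> 0 \<and> (\<forall>y\<in>{a..b}. \<bar>f'' y\<bar> \<le> M))"

lemma M2: "M2 \<ge> 0" "\<And>y. y \<in> {a..b} \<Longrightarrow> \<bar>f'' y\<bar> \<le> M2"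
proof -
  obtain B where B: "\<forall>z\<in>f'' ` {a..b}. norm z \<le> B" using d2bdd unfolding bounded_iff by blast
  then have "\<exists>M. M \<ge> 0 \<and> (\<forall>y\<in>{a..b}. \<bar>f'' y\<bar> \<le> M)"
    by (intro exI[of _ "max B 0"]) auto
  from someI_ex[OF this] show "M2 \<ge> 0" "\<And>y. y \<in> {a..b} \<Longrightarrow> \<bar>f'' y\<bar> \<le> M2"
    unfolding M2_def by auto
qed

lemma fp_lip:
  assumes "y \<in> {a..b}" "z \<in> {a..b}"
  shows "\<bar>f' y - f' z\<bar> \<le> M2 * \<bar>y - z\<bar>"
  using field_differentiable_bound[of "{a..b}" f' f'' M2 y z] d2 M2 assms by auto

lemma Lloc_le:
  assumes c: "c \<in> {a..b}" and e: "e \<ge> 0"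
  shows "Lloc f' {a..b} c e \<le> \<bar>f' c\<bar> + M2 * e"
  unfolding Lloc_def
proof (rule cSup_least)
  show "(\<lambda>y. \<bar>f' y\<bar>) ` ({c - e..c + e} \<inter> {a..b}) \<noteq> {}" using c e by auto
next
  fix t assume "t \<in> (\<lambda>y. \<bar>f' y\<bar>) ` ({c - e..c + e} \<inter> {a..b})"
  then obtain y where y: "y \<in> {c - e..c + e}" "y \<in> {a..b}" and t: "t = \<bar>f' y\<bar>" by auto
  have "\<bar>f' y - f' c\<bar> \<le> M2 * \<bar>y - c\<bar>" using fp_lip[of y c] y(2) c by blast
  also have "\<dots> \<le> M2 * e" using y M2 by (intro mult_left_mono) auto
  finally show "t \<le> \<bar>f' c\<bar> + M2 * e" using t by linarith
qed

lemma Lloc_ge: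
  assumes c: "c \<in> {a..b}" and e: "e \<ge> 0" and y: "y \<in> {c - e..c + e} \<inter> {a..b}"
  shows "\<bar>f' y\<bar> \<le> Lloc f' {a..b} c e"
  unfolding Lloc_def
proof (rule cSup_upper)
  show "\<bar>f' y\<bar> \<in> (\<lambda>y. \<bar>f' y\<bar>) ` ({c - e..c + e} \<inter> {a..b})" using y by auto
  show "bdd_above ((\<lambda>y. \<bar>f' y\<bar>) ` ({c - e..c + e} \<inter> {a..b}))"
  proof (rule bdd_aboveI2)
    fix z assume z: "z \<in> {c - e..c + e} \<inter> {a..b}"
    have "\<bar>f' z - f' c\<bar> \<le> M2 * \<bar>z - c\<bar>" using fp_lip[of z c] z c by blast
    also have "\<dots> \<le> M2 * e" using z M2 by (intro mult_left_mono) auto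
    finally show "\<bar>f' z\<bar> \<le> \<bar>f' c\<bar> + M2 * e" by linarith
  qed
qed

lemma Lloc_nonneg:
  assumes c: "c \<in> {a..b}" and e: "e \<ge> 0"
  shows "0 \<le> Lloc f' {a..b} c e"
proof -
  have "c \<in> {c - e..c + e} \<inter> {a..b}" using c e by auto
  from Lloc_ge[OF c e this] show ?thesis by linarith
qed

lemma f_lip_loc:
  assumes c: "c \<in> {a..b}" and e: "e \<ge> 0"
    and y: "y \<in> {c - e..c + e} \<inter> {a..b}" and z: "z \<in> {c - e..c + e} \<inter> {a..b}"
  shows "\<bar>f y - f z\<bar> \<le> Lloc f' {a..b} c e * \<bar>y - z\<bar>"
proof -
  let ?S = "{c - e..c + e} \<inter> {a..b}"
  have cv: "convex ?S" by (intro convex_Int) auto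
  have dd: "\<And>w. w \<in> ?S \<Longrightarrow> (f has_field_derivative f' w) (at w within ?S)"
  proof -
    fix w assume w: "w \<in> ?S"
    then have "(f has_field_derivative f' w) (at w within {a..b})" using d1 by blast
    then show "(f has_field_derivative f' w) (at w within ?S)"
      by (rule DERIV_subset) blast
  qed
  have bb: "\<And>w. w \<in> ?S \<Longrightarrow> norm (f' w) \<le> Lloc f' {a..b} c e"
    using Lloc_ge[OF c e] by simp
  have "norm (f y - f z) \<le> Lloc f' {a..b} c e * norm (y - z)"
    by (rule field_differentiable_bound[OF cv dd bb y z])
  then show ?thesis by simp
qed

lemma xs_in: "(f ^^ n) x \<in> {a..b}"
  by (induction n) (use xD maps in auto)

definition xh where "xh m n = fst (comp_seq rd f Lb m x n)"
definition ee where "ee m n = snd (comp_seq rd f Lb m x n)"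

lemma xh_Suc: "xh m (Suc n) = rd m (f (xh m n))"
  unfolding xh_def by (simp add: Let_def)
lemma ee_Suc: "ee m (Suc n) = Lb (xh m n) (ee m n) * ee m n + inverse (2^m) * \<bar>xh m (Suc n)\<bar>"
  unfolding xh_def ee_def by (simp add: Let_def)
lemma xh_0: "xh m 0 = rd m x" unfolding xh_def by simp
lemma ee_0: "ee m 0 = inverse (2^m) * \<bar>rd m x\<bar>" unfolding ee_def by simp

lemma xh_in: "m \<ge> 1 \<Longrightarrow> xh m n \<in> {a..b}"
  using inD unfolding xh_def by auto

lemma valid:
  assumes m: "m \<ge> 1"
  shows "0 \<le> ee m n \<and> \<bar>xh m n - (f ^^ n) x\<bar> \<le> ee m n"
proof (induction n)
  case 0
  show ?case using round_err[OF rd m, of x] by (simp add: xh_0 ee_0)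
next
  case (Suc n)
  let ?c = "xh m n" and ?e = "ee m n" and ?y = "(f ^^ n) x"
  have c: "?c \<in> {a..b}" using xh_in[OF m] .
  have e: "?e \<ge> 0" and cy: "\<bar>?c - ?y\<bar> \<le> ?e" using Suc by auto
  have Lp: "0 \<le> Lloc f' {a..b} ?c ?e" using Lloc_nonneg[OF c e] .
  have LL: "Lloc f' {a..b} ?c ?e \<le> Lb ?c ?e" using Lb c e by auto
  have yin: "?y \<in> {?c - ?e..?c + ?e} \<inter> {a..b}" using cy xs_in[of n] by auto
  have cin: "?c \<in> {?c - ?e..?c + ?e} \<inter> {a..b}" using c e by auto
  have r: "\<bar>xh m (Suc n) - f ?c\<bar> \<le> inverse (2^m) * \<bar>xh m (Suc n)\<bar>"
    unfolding xh_Suc using round_err[OF rd m] .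
  have "\<bar>f ?c - f ?y\<bar> \<le> Lloc f' {a..b} ?c ?e * \<bar>?c - ?y\<bar>" using f_lip_loc[OF c e cin yin] .
  also have "\<dots> \<le> Lb ?c ?e * ?e" using LL cy Lp e by (intro mult_mono) auto
  finally have "\<bar>f ?c - f ?y\<bar> \<le> Lb ?c ?e * ?e" .
  with r have "\<bar>xh m (Suc n) - (f ^^ Suc n) x\<bar> \<le> ee m (Suc n)"
    unfolding ee_Suc by simp
  moreover have "0 \<le> ee m (Suc n)" unfolding ee_Suc using Lp LL e
    by (intro add_nonneg_nonneg mult_nonneg_nonneg) auto
  ultimately show ?case by simp
qed

definition R where "R = max \<bar>a\<bar> \<bar>b\<bar>"
lemma R: "y \<in> {a..b} \<Longrightarrow> \<bar>y\<bar> \<le> R" unfolding R_def by auto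
lemma R_nonneg: "R \<ge> 0" unfolding R_def by auto

definition C where "C = 2 * M2 + K"
lemma C_nonneg: "C \<ge> 0" unfolding C_def using M2 K by auto

lemma ee0_bound: "m \<ge> 1 \<Longrightarrow> ee m 0 \<le> inverse (2^m) * R"
  unfolding ee_0 using R[OF xh_in[of m 0]] by (simp add: xh_0)

lemma rec_bound:
  assumes m: "m \<ge> 1"
  shows "ee m (Suc n) \<le> (\<bar>f' ((f ^^ n) x)\<bar> + C * ee m n) * ee m n + inverse (2^m) * R"
proof -
  let ?c = "xh m n" and ?e = "ee m n" and ?y = "(f ^^ n) x"
  have c: "?c \<in> {a..b}" using xh_in[OF m] .
  have e: "?e \<ge> 0" and cy: "\<bar>?c - ?y\<bar> \<le> ?e" using valid[OF m] by auto
  have "Lb ?c ?e \<le> Lloc f' {a..b} ?c ?e + K * ?e" using Lb c e by auto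
  also have "\<dots> \<le> \<bar>f' ?c\<bar> + M2 * ?e + K * ?e" using Lloc_le[OF c e] by simp
  also have "\<bar>f' ?c\<bar> \<le> \<bar>f' ?y\<bar> + M2 * ?e"
  proof -
    have "\<bar>f' ?c - f' ?y\<bar> \<le> M2 * \<bar>?c - ?y\<bar>" using fp_lip[OF c xs_in] .
    also have "\<dots> \<le> M2 * ?e" using cy M2 by (intro mult_left_mono) auto
    finally show ?thesis by linarith
  qed
  finally have "Lb ?c ?e \<le> \<bar>f' ?y\<bar> + C * ?e" unfolding C_def by (simp add: algebra_simps)
  then have "Lb ?c ?e * ?e \<le> (\<bar>f' ?y\<bar> + C * ?e) * ?e" using e by (intro mult_right_mono) auto
  moreover have "inverse (2^m) * \<bar>xh m (Suc n)\<bar> \<le> inverse (2^m) * R"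
    using R[OF xh_in[OF m]] by (intro mult_left_mono) auto
  ultimately show ?thesis unfolding ee_Suc by linarith
qed

end



lemma prod_le_exp_on:
  fixes g h :: "nat \<Rightarrow> real"
  assumes "\<forall>j\<in>A. 0 \<le> g j \<and> g j \<le> h j" and "\<forall>j\<in>A. h j > 0"
  shows "(\<Prod>j\<in>A. g j) \<le> exp (\<Sum>j\<in>A. ln (h j))"
proof -
  have "(\<Prod>j\<in>A. g j) \<le> (\<Prod>j\<in>A. h j)" using assms by (intro prod_mono) auto
  also have "\<dots> = (\<Prod>j\<in>A. exp (ln (h j)))" using assms by (intro prod.cong) auto
  also have "\<dots> = exp (\<Sum>j\<in>A. ln (h j))" by (cases "finite A") (simp_all add: exp_sum)
  finally show ?thesis .
qed

lemma eta_max: "\<alpha> > 0 \<Longrightarrow> y \<ge> 0 \<Longrightarrow> eta \<alpha> y = ln (max y \<alpha>)"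
  unfolding eta_def by (auto simp: max_def)

context setting
begin

lemma ee_nonneg: "m \<ge> 1 \<Longrightarrow> ee m n \<ge> 0" using valid by blast

lemma core_A:
  fixes \<alpha> \<epsilon>1 \<tau> \<mu> r K0 K1 :: real and m N :: nat
  assumes \<alpha>: "\<alpha> > 0" and e1: "\<epsilon>1 > 0" and \<tau>: "0 < \<tau>" "\<tau> \<le> 1" and CtR: "C * \<tau> * R \<le> \<epsilon>1 * \<alpha>"
    and T: "\<forall>n. (\<Sum>j<n. eta \<alpha> \<bar>f' ((f ^^ j) x)\<bar>) \<le> real n * r + K0"
    and S: "\<forall>k. (\<Sum>j<k. ln \<bar>f' ((f ^^ j) x)\<bar>) \<ge> - K1 - real k * \<epsilon>1"
    and apos: "\<forall>j. f' ((f ^^ j) x) \<noteq> 0"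
    and m: "m \<ge> 1" and \<mu>: "0 < \<mu>" "\<mu> \<le> \<bar>x\<bar>"
    and fin: "inverse (2^m) * R * (real N + 1) * exp (real N * max 0 (r + 2 * \<epsilon>1) + K0 + K1) \<le> \<tau> * \<mu> / 2"
  shows "\<forall>n\<le>N. ee m n \<le> \<tau> * \<mu> / 2"
proof (intro allI impI)
  fix n assume "n \<le> N"
  then show "ee m n \<le> \<tau> * \<mu> / 2"
  proof (induction n rule: less_induct)
    case (less n)
    let ?a = "\<lambda>j. \<bar>f' ((f ^^ j) x)\<bar>"
    let ?u = "inverse ((2::real)^m)"
    define g where "g j = ?a j + C * ee m j" for j
    define h where "h j = max (?a j) \<alpha> * (1 + \<epsilon>1)" for j
    have IH: "\<And>j. j < n \<Longrightarrow> ee m j \<le> \<tau> * \<mu> / 2" using less by auto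
    have muR: "\<mu> \<le> R" using \<mu> R[OF xD] by linarith
    have eR: "\<And>j. j < n \<Longrightarrow> ee m j \<le> \<tau> * R"
    proof -
      fix j assume "j < n"
      then have "ee m j \<le> \<tau> * \<mu> / 2" by (rule IH)
      also have "\<dots> \<le> \<tau> * R" using \<tau> \<mu> muR by (simp add: field_simps)
      finally show "ee m j \<le> \<tau> * R" .
    qed
    have g0: "\<forall>j. g j \<ge> 0" unfolding g_def using ee_nonneg[OF m] C_nonneg by auto
    have rec: "\<forall>j<n. ee m (Suc j) \<le> g j * ee m j + ?u * R"
      using rec_bound[OF m] unfolding g_def by auto
    have "ee m n \<le> (?u * R) * (\<Sum>k\<le>n. \<Prod>j\<in>{k..<n}. g j)"
      by (rule lin_rec[OF rec ee0_bound[OF m] g0]) (use R_nonneg in simp)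
    also have "(\<Sum>k\<le>n. \<Prod>j\<in>{k..<n}. g j) \<le> (real N + 1) * exp (real N * max 0 (r + 2 * \<epsilon>1) + K0 + K1)"
    proof -
      have "(\<Sum>k\<le>n. \<Prod>j\<in>{k..<n}. g j) \<le> (\<Sum>k\<le>n. exp (\<Sum>j\<in>{k..<n}. ln (h j)))"
      proof (intro sum_mono prod_le_exp_on ballI conjI)
        fix k j assume k: "k \<in> {..n}" and j: "j \<in> {k..<n}"
        show "0 \<le> g j" using g0 by auto
        show "0 < h j" unfolding h_def using \<alpha> e1 by (simp add: max_def)
        have "C * ee m j \<le> C * (\<tau> * R)" using eR[of j] j C_nonneg by (intro mult_left_mono) auto
        also have "\<dots> \<le> \<epsilon>1 * \<alpha>" using CtR by (simp add: mult.assoc)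
        also have "\<dots> \<le> \<epsilon>1 * max (?a j) \<alpha>" using e1 by (intro mult_left_mono) auto
        finally have "C * ee m j \<le> \<epsilon>1 * max (?a j) \<alpha>" .
        then show "g j \<le> h j" unfolding g_def h_def by (simp add: algebra_simps)
      qed
      also have "\<dots> \<le> (real n + 1) * exp (real N * max 0 (r + 2 * \<epsilon>1) + K0 + K1)"
      proof (rule sum_exp_bound, intro allI impI)
        fix k assume k: "k \<le> n"
        have lnh: "ln (h j) = eta \<alpha> (?a j) + ln (1 + \<epsilon>1)" for j
          unfolding h_def using \<alpha> e1 by (auto simp: ln_mult eta_max max_def)
        have "(\<Sum>j\<in>{k..<n}. ln (h j)) = (\<Sum>j\<in>{k..<n}. eta \<alpha> (?a j)) + real (n - k) * ln (1 + \<epsilon>1)"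
          by (simp add: lnh sum.distrib)
        also have "(\<Sum>j\<in>{k..<n}. eta \<alpha> (?a j)) = (\<Sum>j<n. eta \<alpha> (?a j)) - (\<Sum>j<k. eta \<alpha> (?a j))"
          by (rule sum_ivl_diff[OF k])
        also have "(\<Sum>j<k. eta \<alpha> (?a j)) \<ge> (\<Sum>j<k. ln (?a j))"
        proof (intro sum_mono)
          fix j show "ln (?a j) \<le> eta \<alpha> (?a j)"
            using apos \<alpha> unfolding eta_def by auto
        qed
        then have "(\<Sum>j<n. eta \<alpha> (?a j)) - (\<Sum>j<k. eta \<alpha> (?a j)) \<le> real n * r + K0 + K1 + real k * \<epsilon>1"
          using T S by smt
        moreover have "real (n - k) * ln (1 + \<epsilon>1) \<le> real (n - k) * \<epsilon>1"
          using e1 ln_add_one_self_le_self[of \<epsilon>1] by (intro mult_left_mono) auto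
        ultimately have "(\<Sum>j\<in>{k..<n}. ln (h j)) \<le> real n * r + K0 + K1 + real k * \<epsilon>1 + real (n - k) * \<epsilon>1"
          by linarith
        also have "\<dots> = real n * (r + \<epsilon>1) + K0 + K1" using k by (simp add: of_nat_diff algebra_simps)
        also have "real n * (r + \<epsilon>1) \<le> real N * max 0 (r + 2 * \<epsilon>1)"
        proof -
          have "real n * (r + \<epsilon>1) \<le> real n * max 0 (r + 2 * \<epsilon>1)" using e1 by (intro mult_left_mono) auto
          also have "\<dots> \<le> real N * max 0 (r + 2 * \<epsilon>1)" using less.prems by (intro mult_right_mono) auto
          finally show ?thesis .
        qed
        finally show "(\<Sum>j\<in>{k..<n}. ln (h j)) \<le> real N * max 0 (r + 2 * \<epsilon>1) + K0 + K1" by simp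
      qed
      also have "\<dots> \<le> (real N + 1) * exp (real N * max 0 (r + 2 * \<epsilon>1) + K0 + K1)"
        using less.prems by (intro mult_right_mono) auto
      finally show ?thesis .
    qed
    then have "(?u * R) * (\<Sum>k\<le>n. \<Prod>j\<in>{k..<n}. g j) \<le> (?u * R) * ((real N + 1) * exp (real N * max 0 (r + 2 * \<epsilon>1) + K0 + K1))"
      using R_nonneg by (intro mult_left_mono) auto
    also have "\<dots> \<le> \<tau> * \<mu> / 2" using fin by (simp add: mult.assoc)
    finally show ?case by simp
  qed
qed


lemma core_B:
  fixes V B :: real and m N :: nat
  assumes apos: "\<forall>j. f' ((f ^^ j) x) \<noteq> 0" and m: "m \<ge> 1" and V: "V > 0"
    and SB: "\<forall>n\<le>N. \<forall>k\<le>n. (\<Sum>j<n. ln \<bar>f' ((f ^^ j) x)\<bar>) - (\<Sum>j<k. ln \<bar>f' ((f ^^ j) x)\<bar>) \<le> B"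
    and CV: "C * inverse (2^m) * V * V \<le> 1"
    and fin: "(R + 1) * (real N + 1) * exp B \<le> V"
  shows "\<forall>n\<le>N. ee m n \<le> inverse (2^m) * V"
proof (intro allI impI)
  fix n assume "n \<le> N"
  then show "ee m n \<le> inverse (2^m) * V"
  proof (induction n rule: less_induct)
    case (less n)
    let ?a = "\<lambda>j. \<bar>f' ((f ^^ j) x)\<bar>"
    let ?u = "inverse ((2::real)^m)"
    have u: "?u > 0" by simp
    have IH: "\<And>j. j < n \<Longrightarrow> ee m j \<le> ?u * V" using less by auto
    have rec: "\<forall>j<n. ee m (Suc j) \<le> ?a j * ee m j + ?u * (R + 1)"
    proof (intro allI impI)
      fix j assume j: "j < n"
      have e0: "0 \<le> ee m j" using ee_nonneg[OF m] .
      have "C * ee m j * ee m j \<le> C * (?u * V) * (?u * V)"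
        using IH[OF j] e0 C_nonneg by (intro mult_mono) (auto intro: mult_nonneg_nonneg)
      also have "\<dots> = ?u * (C * ?u * V * V)" by (simp add: algebra_simps)
      also have "\<dots> \<le> ?u * 1" using CV u by (intro mult_left_mono) auto
      finally have "C * ee m j * ee m j \<le> ?u" by simp
      then show "ee m (Suc j) \<le> ?a j * ee m j + ?u * (R + 1)"
        using rec_bound[OF m, of j] by (simp add: algebra_simps)
    qed
    have "ee m n \<le> (?u * (R + 1)) * (\<Sum>k\<le>n. \<Prod>j\<in>{k..<n}. ?a j)"
    proof (rule lin_rec[OF rec])
      have "ee m 0 \<le> ?u * R" using ee0_bound[OF m] .
      also have "\<dots> \<le> ?u * (R + 1)" using u by (intro mult_left_mono) auto
      finally show "ee m 0 \<le> ?u * (R + 1)" .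
      show "\<forall>j. 0 \<le> ?a j" by auto
      show "0 \<le> ?u * (R + 1)" using u R_nonneg by auto
    qed
    also have "(\<Sum>k\<le>n. \<Prod>j\<in>{k..<n}. ?a j) \<le> (real N + 1) * exp B"
    proof -
      have "(\<Sum>k\<le>n. \<Prod>j\<in>{k..<n}. ?a j) \<le> (\<Sum>k\<le>n. exp (\<Sum>j\<in>{k..<n}. ln (?a j)))"
        using apos by (intro sum_mono prod_le_exp_on ballI conjI) auto
      also have "\<dots> \<le> (real n + 1) * exp B"
      proof (rule sum_exp_bound, intro allI impI)
        fix k assume k: "k \<le> n"
        show "(\<Sum>j\<in>{k..<n}. ln (?a j)) \<le> B"
          using sum_ivl_diff[OF k, of "\<lambda>j. ln (?a j)"] SB less.prems k by auto
      qed
      also have "\<dots> \<le> (real N + 1) * exp B" using less.prems by (intro mult_right_mono) auto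
      finally show ?thesis .
    qed
    then have "(?u * (R + 1)) * (\<Sum>k\<le>n. \<Prod>j\<in>{k..<n}. ?a j) \<le> (?u * (R + 1)) * ((real N + 1) * exp B)"
      using R_nonneg by (intro mult_left_mono) auto
    also have "\<dots> = ?u * ((R + 1) * (real N + 1) * exp B)" by (simp add: algebra_simps)
    also have "\<dots> \<le> ?u * V" using fin u by (intro mult_left_mono) auto
    finally show ?case by simp
  qed
qed

end



lemma avg_bounds:
  fixes S :: "nat \<Rightarrow> real"
  assumes lim: "(\<lambda>n. (1 / real n) * S n) \<longlonglongrightarrow> l" and e: "\<epsilon> > 0"
  shows "\<exists>K\<ge>0. \<forall>n. S n \<le> real n * (l + \<epsilon>) + K \<and> S n \<ge> real n * (l - \<epsilon>) - K"
proof -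
  have ev: "eventually (\<lambda>n. dist ((1 / real n) * S n) l < \<epsilon> \<and> n \<ge> 1) sequentially"
    using lim e unfolding tendsto_iff by (intro eventually_conj) (auto simp: eventually_sequentially)
  have ev1: "eventually (\<lambda>n. S n \<le> real n * (l + \<epsilon>)) sequentially"
  proof (rule eventually_mono[OF ev])
    fix n assume h: "dist ((1 / real n) * S n) l < \<epsilon> \<and> n \<ge> 1"
    then have "S n / real n < l + \<epsilon>" by (simp add: dist_real_def abs_less_iff)
    moreover have "0 < real n" using h by simp
    ultimately have "S n < (l + \<epsilon>) * real n" by (simp add: pos_divide_less_eq)
    then show "S n \<le> real n * (l + \<epsilon>)" by (simp add: mult.commute)
  qed
  have ev2: "eventually (\<lambda>n. real n * (l - \<epsilon>) \<le> S n) sequentially"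
  proof (rule eventually_mono[OF ev])
    fix n assume h: "dist ((1 / real n) * S n) l < \<epsilon> \<and> n \<ge> 1"
    then have "l - \<epsilon> < S n / real n" by (simp add: dist_real_def abs_less_iff)
    moreover have "0 < real n" using h by simp
    ultimately have "(l - \<epsilon>) * real n < S n" by (simp add: pos_less_divide_eq)
    then show "real n * (l - \<epsilon>) \<le> S n" by (simp add: mult.commute)
  qed
  obtain K1 where K1: "K1 \<ge> 0" "\<forall>n. S n \<le> real n * (l + \<epsilon>) + K1" using ev_bound_const[OF ev1] by blast
  obtain K2 where K2: "K2 \<ge> 0" "\<forall>n. real n * (l - \<epsilon>) \<le> S n + K2" using ev_bound_const[OF ev2] by blast
  show ?thesis
    by (rule exI[of _ "K1 + K2"]) (use K1 K2 in \<open>smt (verit)\<close>)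
qed

lemma limsup_bound:
  fixes T :: "nat \<Rightarrow> real"
  assumes "limsup (\<lambda>n. ereal ((1 / real n) * T n)) < ereal r"
  shows "\<exists>K\<ge>0. \<forall>n. T n \<le> real n * r + K"
proof -
  have ev: "eventually (\<lambda>n. ereal ((1 / real n) * T n) < ereal r \<and> n \<ge> 1) sequentially"
    using Limsup_lessD[OF assms] by (intro eventually_conj) (auto simp: eventually_sequentially)
  have "eventually (\<lambda>n. T n \<le> real n * r) sequentially"
  proof (rule eventually_mono[OF ev])
    fix n assume h: "ereal ((1 / real n) * T n) < ereal r \<and> n \<ge> 1"
    then have "T n / real n < r" by simp
    moreover have "0 < real n" using h by simp
    ultimately have "T n < r * real n" by (simp add: pos_divide_less_eq)
    then show "T n \<le> real n * r" by (simp add: mult.commute)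
  qed
  from ev_bound_const[OF this] show ?thesis .
qed

lemma inv_pow2_le:
  fixes m :: nat and t :: real
  assumes "real m \<ge> t"
  shows "inverse ((2::real)^m) \<le> exp (- (t * ln 2))"
proof -
  have "(2::real)^m = exp (real m * ln 2)" by (simp add: exp_of_nat_mult)
  then have "inverse ((2::real)^m) = exp (- (real m * ln 2))" by (simp add: exp_minus)
  also have "\<dots> \<le> exp (- (t * ln 2))" using assms by simp
  finally show ?thesis .
qed

lemma ratio_ev:
  fixes M :: "nat \<Rightarrow> nat" and q0 q :: real
  assumes ev: "eventually (\<lambda>N. M N \<le> nat \<lceil>real N * q0\<rceil>) sequentially"
    and q0: "q0 \<ge> 0" and q: "q0 < q"
  shows "eventually (\<lambda>N. real (M N) / real N \<le> q) sequentially"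
proof -
  have ev2: "eventually (\<lambda>N. real N \<ge> 1 / (q - q0) \<and> N \<ge> 1) sequentially"
  proof -
    have "real N \<ge> 1 / (q - q0) \<and> N \<ge> 1" if "N \<ge> nat \<lceil>1 / (q - q0)\<rceil> + 1" for N
      using that by linarith
    then show ?thesis unfolding eventually_sequentially by blast
  qed
  show ?thesis
  proof (rule eventually_mono[OF eventually_conj[OF ev ev2]])
    fix N assume h: "M N \<le> nat \<lceil>real N * q0\<rceil> \<and> real N \<ge> 1 / (q - q0) \<and> N \<ge> 1"
    have "real (M N) \<le> real (nat \<lceil>real N * q0\<rceil>)" using h by simp
    also have "\<dots> \<le> real N * q0 + 1"
    proof -
      have y0: "real N * q0 \<ge> 0" using q0 by simp
      then have "real (nat \<lceil>real N * q0\<rceil>) = real_of_int \<lceil>real N * q0\<rceil>" by simp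
      then show ?thesis using of_int_ceiling_le_add_one[of "real N * q0"] by linarith
    qed
    finally have "real (M N) \<le> real N * q0 + 1" .
    moreover have "1 \<le> real N * (q - q0)" using h q by (simp add: divide_le_eq mult.commute)
    ultimately have "real (M N) \<le> real N * q" by (simp add: algebra_simps)
    then show "real (M N) / real N \<le> q" using h by (simp add: divide_le_eq mult.commute)
  qed
qed




context setting
begin

definition A where "A = \<bar>f' a\<bar> + M2 * (b - a)"

lemma A_bound: "\<bar>f' ((f ^^ j) x)\<bar> \<le> A"
proof -
  have y: "(f ^^ j) x \<in> {a..b}" by (rule xs_in)
  have aa: "a \<in> {a..b}" using ab by simp
  have "\<bar>f' ((f ^^ j) x) - f' a\<bar> \<le> M2 * \<bar>(f ^^ j) x - a\<bar>" by (rule fp_lip[OF y aa])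
  also have "\<dots> \<le> M2 * (b - a)" using y M2 by (intro mult_left_mono) auto
  finally show ?thesis unfolding A_def by linarith
qed

lemma A_nonneg: "A \<ge> 0" using A_bound[of 0] by linarith

lemma lba_mono:
  assumes \<alpha>: "0 < \<alpha>" and "\<alpha> \<le> \<beta>"
  shows "lambda_bar_alpha f f' x \<alpha> \<le> lambda_bar_alpha f f' x \<beta>"
  unfolding lambda_bar_alpha_def
proof (rule Limsup_mono, rule always_eventually, intro allI)
  fix n
  have "(\<Sum>k<n. eta \<alpha> \<bar>f' ((f ^^ k) x)\<bar>) \<le> (\<Sum>k<n. eta \<beta> \<bar>f' ((f ^^ k) x)\<bar>)"
  proof (rule sum_mono)
    fix k
    have "ln (max \<bar>f' ((f ^^ k) x)\<bar> \<alpha>) \<le> ln (max \<bar>f' ((f ^^ k) x)\<bar> \<beta>)"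
      using \<alpha> assms(2) by (subst ln_le_cancel_iff) (auto simp: max_def)
    then show "eta \<alpha> \<bar>f' ((f ^^ k) x)\<bar> \<le> eta \<beta> \<bar>f' ((f ^^ k) x)\<bar>"
      using \<alpha> assms(2) by (simp add: eta_max)
  qed
  then show "ereal (1 / real n * (\<Sum>k<n. eta \<alpha> \<bar>f' ((f ^^ k) x)\<bar>))
      \<le> ereal (1 / real n * (\<Sum>k<n. eta \<beta> \<bar>f' ((f ^^ k) x)\<bar>))"
    by (simp add: divide_right_mono)
qed

lemma lba_upper:
  assumes \<alpha>: "0 < \<alpha>"
  shows "lambda_bar_alpha f f' x \<alpha> \<le> ereal (ln (max A \<alpha>))"
  unfolding lambda_bar_alpha_def
proof (rule Limsup_bounded)
  have "ereal (1 / real n * (\<Sum>k<n. eta \<alpha> \<bar>f' ((f ^^ k) x)\<bar>)) \<le> ereal (ln (max A \<alpha>))"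
    if n: "n \<ge> 1" for n
  proof -
    have "(\<Sum>k<n. eta \<alpha> \<bar>f' ((f ^^ k) x)\<bar>) \<le> (\<Sum>k<n. ln (max A \<alpha>))"
    proof (rule sum_mono)
      fix k
      have "ln (max \<bar>f' ((f ^^ k) x)\<bar> \<alpha>) \<le> ln (max A \<alpha>)"
        using \<alpha> A_bound[of k] by (subst ln_le_cancel_iff) (auto simp: max_def)
      then show "eta \<alpha> \<bar>f' ((f ^^ k) x)\<bar> \<le> ln (max A \<alpha>)" using \<alpha> by (simp add: eta_max)
    qed
    then have "(\<Sum>k<n. eta \<alpha> \<bar>f' ((f ^^ k) x)\<bar>) \<le> real n * ln (max A \<alpha>)" by simp
    then have "1 / real n * (\<Sum>k<n. eta \<alpha> \<bar>f' ((f ^^ k) x)\<bar>) \<le> ln (max A \<alpha>)"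
      using n by (simp add: divide_le_eq mult.commute)
    then show ?thesis by simp
  qed
  then show "eventually (\<lambda>n. ereal (1 / real n * (\<Sum>k<n. eta \<alpha> \<bar>f' ((f ^^ k) x)\<bar>)) \<le> ereal (ln (max A \<alpha>))) sequentially"
    unfolding eventually_sequentially by blast
qed

lemma lb_eq: "lambda_bar f f' x = Inf (lambda_bar_alpha f f' x ` {0<..})"
  unfolding lambda_bar_def
proof (rule tendsto_Lim)
  show "\<not> trivial_limit (at_right (0::real))" by simp
  let ?I = "Inf (lambda_bar_alpha f f' x ` {0<..})"
  show "((\<lambda>\<alpha>. lambda_bar_alpha f f' x \<alpha>) \<longlongrightarrow> ?I) (at_right 0)"
  proof (rule order_tendstoI)
    fix y assume y: "y < ?I"
    show "eventually (\<lambda>\<alpha>. y < lambda_bar_alpha f f' x \<alpha>) (at_right 0)"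
    proof (rule eventually_mono[OF eventually_at_right_real[of 0 1]])
      fix \<alpha> :: real assume "\<alpha> \<in> {0<..<1}"
      then have "?I \<le> lambda_bar_alpha f f' x \<alpha>" by (intro Inf_lower) auto
      then show "y < lambda_bar_alpha f f' x \<alpha>" using y by simp
    qed simp
  next
    fix y assume y: "?I < y"
    then obtain \<alpha>0 where a0: "\<alpha>0 \<in> {0<..}" "lambda_bar_alpha f f' x \<alpha>0 < y"
      unfolding Inf_less_iff by blast
    show "eventually (\<lambda>\<alpha>. lambda_bar_alpha f f' x \<alpha> < y) (at_right 0)"
    proof (rule eventually_mono[OF eventually_at_right_real[of 0 \<alpha>0]])
      show "0 < \<alpha>0" using a0 by simp
      fix \<alpha> :: real assume "\<alpha> \<in> {0<..<\<alpha>0}"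
      then have "lambda_bar_alpha f f' x \<alpha> \<le> lambda_bar_alpha f f' x \<alpha>0" by (intro lba_mono) auto
      then show "lambda_bar_alpha f f' x \<alpha> < y" using a0 by simp
    qed
  qed
qed

lemma exists_alpha:
  assumes "lambda_bar f f' x < ereal c"
  shows "\<exists>\<alpha>>0. lambda_bar_alpha f f' x \<alpha> < ereal c"
  using assms unfolding lb_eq Inf_less_iff by auto

lemma lb_finite: "lambda_bar f f' x \<le> ereal (ln (max A 1))"
proof -
  have "lambda_bar f f' x \<le> lambda_bar_alpha f f' x 1" unfolding lb_eq by (intro Inf_lower) auto
  also have "\<dots> \<le> ereal (ln (max A 1))" by (rule lba_upper) simp
  finally show ?thesis .
qed

definition mu where "mu N = Min ((\<lambda>n. \<bar>(f ^^ n) x\<bar>) ` {0..N})"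

lemma mu_le: "n \<le> N \<Longrightarrow> mu N \<le> \<bar>(f ^^ n) x\<bar>"
  unfolding mu_def by (intro Min_le) auto

lemma mu_pos: assumes nz: "\<forall>n. (f ^^ n) x \<noteq> 0" shows "mu N > 0"
  unfolding mu_def using nz by (subst Min_gr_iff) auto

lemma mu_ev:
  assumes nz: "\<forall>n. (f ^^ n) x \<noteq> 0"
    and minlim: "(\<lambda>N. log 2 (Min ((\<lambda>n. \<bar>(f ^^ n) x\<bar>) ` {0..N})) / real N) \<longlonglongrightarrow> 0"
    and d: "\<delta> > 0"
  shows "eventually (\<lambda>N. mu N \<ge> exp (- (\<delta> * real N))) sequentially"
proof -
  have "eventually (\<lambda>N. dist (log 2 (mu N) / real N) 0 < \<delta> / ln 2 \<and> N \<ge> 1) sequentially"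
    using minlim d unfolding tendsto_iff mu_def[symmetric]
    by (intro eventually_conj) (auto simp: eventually_sequentially)
  then show ?thesis
  proof (rule eventually_mono)
    fix N assume h: "dist (log 2 (mu N) / real N) 0 < \<delta> / ln 2 \<and> N \<ge> 1"
    have Np: "real N > 0" using h by simp
    have h1: "\<bar>log 2 (mu N)\<bar> / real N < \<delta> / ln 2" using h by (simp add: dist_real_def abs_divide)
    have "- \<bar>log 2 (mu N)\<bar> \<le> log 2 (mu N)" by simp
    then have "- \<bar>log 2 (mu N)\<bar> / real N \<le> log 2 (mu N) / real N"
      by (rule divide_right_mono) (use Np in simp)
    then have "- (\<delta> / ln 2) < log 2 (mu N) / real N" using h1 by simp
    then have "- (\<delta> / ln 2) * real N < log 2 (mu N)" using Np by (simp add: pos_less_divide_eq)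
    then have "- (\<delta> / ln 2) * real N * ln 2 < log 2 (mu N) * ln 2" by (intro mult_strict_right_mono) auto
    moreover have "log 2 (mu N) * ln 2 = ln (mu N)" by (simp add: log_def)
    ultimately have "- (\<delta> * real N) < ln (mu N)" by (simp add: field_simps)
    then have "exp (- (\<delta> * real N)) < exp (ln (mu N))" by simp
    then show "mu N \<ge> exp (- (\<delta> * real N))" using mu_pos[OF nz, of N] by simp
  qed
qed

lemma check_le:
  assumes m: "m \<ge> 1" and \<mu>: "0 < \<mu>" "\<forall>n\<le>N. \<mu> \<le> \<bar>(f ^^ n) x\<bar>"
    and tau: "\<tau> = 10 powr (- real_of_int p) / (1 + 10 powr (- real_of_int p))"
    and E: "\<forall>n\<le>N. ee m n \<le> \<tau> * \<mu> / 2"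
  shows "m_min rd f Lb x N p \<le> m"
  unfolding m_min_def
proof (rule Least_le, intro conjI m allI impI)
  fix n assume n: "n \<le> N"
  define t where "t = 10 powr (- real_of_int p)"
  have tp: "t > 0" unfolding t_def by simp
  have t0: "0 < \<tau>" "\<tau> \<le> 1" unfolding tau t_def[symmetric] using tp by (auto simp: divide_le_eq)
  have v: "\<bar>xh m n - (f ^^ n) x\<bar> \<le> ee m n" using valid[OF m] by blast
  have e: "ee m n \<le> \<tau> * \<mu> / 2" using E n by auto
  have "\<mu> - \<tau> * \<mu> / 2 \<le> \<bar>xh m n\<bar>" using v e \<mu> n by force
  then have "\<tau> * (\<mu> - \<tau> * \<mu> / 2) \<le> \<tau> * \<bar>xh m n\<bar>" using t0 by (intro mult_left_mono) auto
  moreover have "\<tau> * \<mu> / 2 \<le> \<tau> * (\<mu> - \<tau> * \<mu> / 2)"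
  proof -
    have "\<tau> * (\<mu> - \<tau> * \<mu> / 2) - \<tau> * \<mu> / 2 = \<tau> * \<mu> * (1 - \<tau>) / 2" by (simp add: algebra_simps)
    moreover have "\<tau> * \<mu> * (1 - \<tau>) / 2 \<ge> 0" using t0 \<mu> by simp
    ultimately show ?thesis by linarith
  qed
  ultimately have "ee m n \<le> \<tau> * \<bar>xh m n\<bar>" using e by linarith
  then show "snd (comp_seq rd f Lb m x n) \<le> 10 powr - real_of_int p / (1 + 10 powr - real_of_int p) * \<bar>fst (comp_seq rd f Lb m x n)\<bar>"
    unfolding ee_def xh_def tau .
qed

end



lemma ev_log:
  fixes c1 c2 :: real assumes c2: "c2 > 0"
  shows "eventually (\<lambda>N. c1 + ln (real N + 1) \<le> c2 * real N) sequentially"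
proof (rule eventually_mono[OF ev_lin_exp[OF c2, of "exp c1"]])
  fix N assume h: "exp c1 * (real N + 1) \<le> exp (c2 * real N)"
  have "exp c1 * (real N + 1) = exp (c1 + ln (real N + 1))" by (simp add: exp_add)
  with h show "c1 + ln (real N + 1) \<le> c2 * real N" by simp
qed

lemma nat_ceil_ge: "real (nat \<lceil>y\<rceil>) \<ge> y" by linarith

lemma sigma_le:
  assumes "eventually (\<lambda>N. real (m_min rd f Lb x N p) / real N \<le> q) sequentially"
  shows "sigma rd f Lb x p \<le> ereal q"
  unfolding sigma_def
  by (rule Limsup_bounded) (use assms in \<open>auto elim: eventually_mono\<close>)

context setting
begin

lemma case_neg:
  assumes nz: "\<forall>n. (f ^^ n) x \<noteq> 0"
    and minlim: "(\<lambda>N. log 2 (Min ((\<lambda>n. \<bar>(f ^^ n) x\<bar>) ` {0..N})) / real N) \<longlonglongrightarrow> 0"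
    and apos: "\<forall>j. f' ((f ^^ j) x) \<noteq> 0"
    and lim: "(\<lambda>n. (1 / real n) * (\<Sum>k<n. ln \<bar>f' ((f ^^ k) x)\<bar>)) \<longlonglongrightarrow> l"
    and l: "l < 0" and e: "\<epsilon> > 0"
  shows "eventually (\<lambda>N. real (m_min rd f Lb x N p) / real N \<le> \<epsilon>) sequentially"
proof -
  define \<tau> where "\<tau> = 10 powr (- real_of_int p) / (1 + 10 powr (- real_of_int p))"
  have \<tau>: "\<tau> > 0"
  proof -
    have t: "(10::real) powr (- real_of_int p) > 0" by simp
    then have t1: "0 < 1 + (10::real) powr (- real_of_int p)" by linarith
    show ?thesis unfolding \<tau>_def by (rule divide_pos_pos[OF t t1])
  qed
  define \<kappa> where "\<kappa> = \<epsilon> * ln 2 / 2"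
  have \<kappa>: "\<kappa> > 0" unfolding \<kappa>_def using e by simp
  define \<epsilon>2 where "\<epsilon>2 = \<kappa> / 16"
  have e2: "\<epsilon>2 > 0" unfolding \<epsilon>2_def using \<kappa> by simp
  let ?S = "\<lambda>n. (\<Sum>k<n. ln \<bar>f' ((f ^^ k) x)\<bar>)"
  obtain K1 where K1: "K1 \<ge> 0" "\<forall>n. ?S n \<le> real n * (l + \<epsilon>2) + K1 \<and> ?S n \<ge> real n * (l - \<epsilon>2) - K1"
    using avg_bounds[OF lim e2] by blast
  define q0 where "q0 = \<epsilon> / 2"
  have q0: "q0 \<ge> 0" "q0 < \<epsilon>" unfolding q0_def using e by auto
  have ev: "eventually (\<lambda>N. N \<ge> 1 \<and> mu N \<ge> exp (- (\<kappa> / 4 * real N))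
      \<and> ln (C + 1) + ln (real N + 1) \<le> \<kappa> / 2 * real N
      \<and> (ln (R + 1) + 2 * K1) + ln (real N + 1) \<le> \<kappa> / 8 * real N
      \<and> - ln (\<tau> / 2) + ln (real N + 1) \<le> \<kappa> / 2 * real N) sequentially"
    using mu_ev[OF nz minlim, of "\<kappa> / 4"] \<kappa>
    by (intro eventually_conj ev_log) (auto simp: eventually_sequentially)
  have "eventually (\<lambda>N. m_min rd f Lb x N p \<le> nat \<lceil>real N * q0\<rceil>) sequentially"
  proof (rule eventually_mono[OF ev], elim conjE)
    fix N :: nat
    assume N1: "N \<ge> 1" and muN: "mu N \<ge> exp (- (\<kappa> / 4 * real N))"
      and E3: "ln (C + 1) + ln (real N + 1) \<le> \<kappa> / 2 * real N"
      and E4: "(ln (R + 1) + 2 * K1) + ln (real N + 1) \<le> \<kappa> / 8 * real N"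
      and E5: "- ln (\<tau> / 2) + ln (real N + 1) \<le> \<kappa> / 2 * real N"
    define m where "m = nat \<lceil>real N * q0\<rceil>"
    have mq: "real m \<ge> real N * q0" unfolding m_def by (rule nat_ceil_ge)
    have m1: "m \<ge> 1"
    proof -
      have "real N * q0 > 0" using N1 e unfolding q0_def by simp
      then show ?thesis using mq by linarith
    qed
    define u where "u = inverse ((2::real)^m)"
    have u0: "u > 0" unfolding u_def by simp
    have uk: "u \<le> exp (- (\<kappa> * real N))"
    proof -
      have "u \<le> exp (- (real N * q0 * ln 2))" unfolding u_def by (rule inv_pow2_le[OF mq])
      also have "real N * q0 * ln 2 = \<kappa> * real N" unfolding q0_def \<kappa>_def by simp
      finally show ?thesis .
    qed
    define V where "V = exp (\<kappa> / 4 * real N)"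
    have V: "V > 0" unfolding V_def by simp
    define B where "B = 2 * real N * \<epsilon>2 + 2 * K1"
    have ln0: "ln (real N + 1) \<ge> 0" by simp
    have SB: "\<forall>n\<le>N. \<forall>k\<le>n. ?S n - ?S k \<le> B"
    proof (intro allI impI)
      fix n k assume n: "n \<le> N" and k: "k \<le> n"
      have a1: "?S n \<le> real n * l + real n * \<epsilon>2 + K1" using K1(2) by (simp add: algebra_simps)
      have a2: "?S k \<ge> real k * l - real k * \<epsilon>2 - K1" using K1(2) by (simp add: algebra_simps)
      have b1: "real n * l \<le> real k * l" using k l by (intro mult_right_mono_neg) auto
      have b2: "real n * \<epsilon>2 \<le> real N * \<epsilon>2" using n e2 by (intro mult_right_mono) auto
      have b3: "real k * \<epsilon>2 \<le> real N * \<epsilon>2" using n k e2 by (intro mult_right_mono) auto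
      show "?S n - ?S k \<le> B" unfolding B_def using a1 a2 b1 b2 b3 by linarith
    qed
    have CV: "C * u * V * V \<le> 1"
    proof -
      have "u * V * V \<le> exp (- (\<kappa> * real N)) * V * V" using uk V by (intro mult_right_mono) auto
      then have "C * (u * V * V) \<le> C * (exp (- (\<kappa> * real N)) * V * V)" using C_nonneg by (rule mult_left_mono)
      also have "\<dots> \<le> (C + 1) * (exp (- (\<kappa> * real N)) * V * V)" using V by (intro mult_right_mono) auto
      finally have "C * u * V * V \<le> (C + 1) * (exp (- (\<kappa> * real N)) * V * V)" by (simp add: mult.assoc)
      also have "\<dots> = exp (ln (C + 1) - \<kappa> / 2 * real N)"
      proof -
        have "exp (- (\<kappa> * real N)) * V * V = exp (- (\<kappa> * real N) + \<kappa> / 4 * real N + \<kappa> / 4 * real N)"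
          unfolding V_def by (simp only: exp_add)
        also have "- (\<kappa> * real N) + \<kappa> / 4 * real N + \<kappa> / 4 * real N = - (\<kappa> / 2 * real N)" by simp
        finally have "exp (- (\<kappa> * real N)) * V * V = exp (- (\<kappa> / 2 * real N))" .
        moreover have "C + 1 = exp (ln (C + 1))" using C_nonneg by simp
        ultimately have "(C + 1) * (exp (- (\<kappa> * real N)) * V * V) = exp (ln (C + 1)) * exp (- (\<kappa> / 2 * real N))"
          by simp
        also have "\<dots> = exp (ln (C + 1) - \<kappa> / 2 * real N)" by (simp add: exp_add[symmetric])
        finally show ?thesis .
      qed
      also have "\<dots> \<le> exp 0" using E3 ln0 by (subst exp_le_cancel_iff) linarith
      finally show ?thesis by simp
    qed
    have fin: "(R + 1) * (real N + 1) * exp B \<le> V"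
    proof -
      have "(R + 1) * (real N + 1) * exp B = exp (ln (R + 1) + ln (real N + 1) + B)"
        using R_nonneg by (simp add: exp_add)
      also have "\<dots> \<le> V"
      proof -
        have i1: "2 * real N * (\<kappa> / 16) = \<kappa> / 8 * real N" by simp
        have i2: "\<kappa> / 4 * real N = \<kappa> / 8 * real N + \<kappa> / 8 * real N" by simp
        show ?thesis unfolding V_def B_def \<epsilon>2_def using E4 i1 i2 by (subst exp_le_cancel_iff) linarith
      qed
      finally show ?thesis .
    qed
    have EB: "\<forall>n\<le>N. ee m n \<le> u * V" using core_B[OF apos m1 V SB CV[unfolded u_def] fin] unfolding u_def .
    have muP: "mu N > 0" using mu_pos[OF nz] .
    have "u * V \<le> \<tau> * mu N / 2"
    proof -
      have "u * V \<le> exp (- (\<kappa> * real N)) * V" using uk V by (intro mult_right_mono) auto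
      also have "\<dots> = exp (- (\<kappa> * real N) + \<kappa> / 4 * real N)" unfolding V_def by (simp only: exp_add)
      also have "\<dots> = exp (- (3 * \<kappa> / 4 * real N))" by simp
      also have "\<dots> \<le> exp (ln (\<tau> / 2) - \<kappa> / 4 * real N)" using E5 ln0 by (subst exp_le_cancel_iff) linarith
      also have "\<dots> = exp (ln (\<tau> / 2)) * exp (- (\<kappa> / 4 * real N))" by (simp add: exp_add[symmetric])
      also have "\<dots> = \<tau> / 2 * exp (- (\<kappa> / 4 * real N))" using \<tau> by simp
      also have "\<dots> \<le> \<tau> / 2 * mu N" using muN \<tau> by (intro mult_left_mono) auto
      finally show ?thesis by simp
    qed
    then have "\<forall>n\<le>N. ee m n \<le> \<tau> * mu N / 2" using EB by force
    then have "m_min rd f Lb x N p \<le> m"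
      by (intro check_le[OF m1 muP _ \<tau>_def]) (auto intro: mu_le)
    then show "m_min rd f Lb x N p \<le> nat \<lceil>real N * q0\<rceil>" unfolding m_def .
  qed
  from ratio_ev[OF this q0] show ?thesis .
qed


lemma case_pos:
  assumes nz: "\<forall>n. (f ^^ n) x \<noteq> 0"
    and minlim: "(\<lambda>N. log 2 (Min ((\<lambda>n. \<bar>(f ^^ n) x\<bar>) ` {0..N})) / real N) \<longlonglongrightarrow> 0"
    and apos: "\<forall>j. f' ((f ^^ j) x) \<noteq> 0"
    and lim: "(\<lambda>n. (1 / real n) * (\<Sum>k<n. ln \<bar>f' ((f ^^ k) x)\<bar>)) \<longlonglongrightarrow> l"
    and l: "l \<ge> 0" and e: "\<epsilon> > 0" and ell: "ll \<ge> 0" "lambda_bar f f' x \<le> ereal ll"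
  shows "\<exists>p0::int. \<forall>p\<ge>p0. eventually (\<lambda>N. real (m_min rd f Lb x N p) / real N \<le> ll / ln 2 + \<epsilon>) sequentially"
proof -
  define \<epsilon>1 where "\<epsilon>1 = \<epsilon> * ln 2 / 10"
  have e1: "\<epsilon>1 > 0" unfolding \<epsilon>1_def using e by simp
  define r where "r = ll + \<epsilon>1"
  have "lambda_bar f f' x < ereal r" using ell e1 unfolding r_def by (simp add: le_less_trans)
  then obtain \<alpha> where \<alpha>: "\<alpha> > 0" "lambda_bar_alpha f f' x \<alpha> < ereal r"
    using exists_alpha by blast
  let ?T = "\<lambda>n. (\<Sum>k<n. eta \<alpha> \<bar>f' ((f ^^ k) x)\<bar>)"
  let ?S = "\<lambda>n. (\<Sum>k<n. ln \<bar>f' ((f ^^ k) x)\<bar>)"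
  obtain K0 where K0: "K0 \<ge> 0" "\<forall>n. ?T n \<le> real n * r + K0"
    using limsup_bound[of ?T r] \<alpha>(2) unfolding lambda_bar_alpha_def by blast
  obtain K1 where K1: "K1 \<ge> 0" "\<forall>n. ?S n \<le> real n * (l + \<epsilon>1) + K1 \<and> ?S n \<ge> real n * (l - \<epsilon>1) - K1"
    using avg_bounds[OF lim e1] by blast
  have Sb: "\<forall>k. ?S k \<ge> - K1 - real k * \<epsilon>1"
  proof
    fix k
    have "real k * l \<ge> 0" using l by simp
    then show "?S k \<ge> - K1 - real k * \<epsilon>1" using K1(2)[rule_format, of k] by (simp add: algebra_simps)
  qed
  define X where "X = (C * R + 1) / (\<epsilon>1 * \<alpha>)"
  have CR: "C * R \<ge> 0" using C_nonneg R_nonneg by simp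
  have X: "X > 0" unfolding X_def using CR e1 \<alpha>(1) by (intro divide_pos_pos) auto
  define p0 where "p0 = \<lceil>log 10 X\<rceil>"
  define \<rho> where "\<rho> = max 0 (r + 2 * \<epsilon>1)"
  have \<rho>: "\<rho> = ll + 3 * \<epsilon>1" unfolding \<rho>_def r_def using ell e1 by simp
  define q0 where "q0 = (\<rho> + 2 * \<epsilon>1) / ln 2"
  have q0: "q0 \<ge> 0" "q0 < ll / ln 2 + \<epsilon>"
  proof -
    have "q0 = ll / ln 2 + \<epsilon> / 2" unfolding q0_def \<rho> \<epsilon>1_def by (simp add: field_simps)
    then show "q0 \<ge> 0" "q0 < ll / ln 2 + \<epsilon>" using e ell by auto
  qed
  have q0p: "q0 > 0" unfolding q0_def \<rho>_def using e1 by (simp add: add_nonneg_pos)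
  show ?thesis
  proof (intro exI[of _ p0] allI impI)
    fix p :: int assume p: "p \<ge> p0"
    define t where "t = (10::real) powr (- real_of_int p)"
    have t0: "t > 0" unfolding t_def by simp
    define \<tau> where "\<tau> = 10 powr (- real_of_int p) / (1 + 10 powr (- real_of_int p))"
    have \<tau>t: "\<tau> = t / (1 + t)" unfolding \<tau>_def t_def ..
    have \<tau>: "\<tau> > 0" "\<tau> \<le> 1" "\<tau> \<le> t" unfolding \<tau>t using t0 by (auto simp: divide_le_eq)
    have tX: "t \<le> inverse X"
    proof -
      have "t \<le> 10 powr (- log 10 X)" unfolding t_def
        using p unfolding p0_def by (intro powr_mono) linarith+
      also have "\<dots> = inverse X" using X by (simp add: powr_minus)
      finally show ?thesis .
    qed
    have CtR: "C * \<tau> * R \<le> \<epsilon>1 * \<alpha>"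
    proof -
      have "C * \<tau> * R = (C * R) * \<tau>" by simp
      also have "\<dots> \<le> (C * R + 1) * \<tau>" using \<tau> by (intro mult_right_mono) auto
      also have "\<dots> \<le> (C * R + 1) * inverse X" using \<tau> tX C_nonneg R_nonneg by (intro mult_left_mono) auto
      also have "\<dots> = \<epsilon>1 * \<alpha>"
      proof -
        have "C * R + 1 \<noteq> 0" using CR by linarith
        then show ?thesis unfolding X_def using e1 \<alpha>(1) by (simp add: field_simps)
      qed
      finally show ?thesis .
    qed
    have ev: "eventually (\<lambda>N. N \<ge> 1 \<and> mu N \<ge> exp (- (\<epsilon>1 * real N))
        \<and> (ln (R + 1) + K0 + K1 - ln (\<tau> / 2)) + ln (real N + 1) \<le> \<epsilon>1 * real N) sequentially"
      using mu_ev[OF nz minlim e1] e1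
      by (intro eventually_conj ev_log) (auto simp: eventually_sequentially)
    have "eventually (\<lambda>N. m_min rd f Lb x N p \<le> nat \<lceil>real N * q0\<rceil>) sequentially"
    proof (rule eventually_mono[OF ev], elim conjE)
      fix N :: nat
      assume N1: "N \<ge> 1" and muN: "mu N \<ge> exp (- (\<epsilon>1 * real N))"
        and E3: "(ln (R + 1) + K0 + K1 - ln (\<tau> / 2)) + ln (real N + 1) \<le> \<epsilon>1 * real N"
      define m where "m = nat \<lceil>real N * q0\<rceil>"
      have mq: "real m \<ge> real N * q0" unfolding m_def by (rule nat_ceil_ge)
      have m1: "m \<ge> 1"
      proof -
        have "real N * q0 > 0" using N1 q0p by simp
        then show ?thesis using mq by linarith
      qed
      define u where "u = inverse ((2::real)^m)"
      have u0: "u > 0" unfolding u_def by simp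
      have uk: "u \<le> exp (- (real N * (\<rho> + 2 * \<epsilon>1)))"
      proof -
        have "u \<le> exp (- (real N * q0 * ln 2))" unfolding u_def by (rule inv_pow2_le[OF mq])
        also have "real N * q0 * ln 2 = real N * (\<rho> + 2 * \<epsilon>1)" unfolding q0_def by simp
        finally show ?thesis .
      qed
      have muP: "mu N > 0" using mu_pos[OF nz] .
      have mux: "mu N \<le> \<bar>x\<bar>" using mu_le[of 0 N] by simp
      have fin: "inverse (2^m) * R * (real N + 1) * exp (real N * max 0 (r + 2 * \<epsilon>1) + K0 + K1) \<le> \<tau> * mu N / 2"
      proof -
        let ?Z = "real N * \<rho> + K0 + K1"
        have "inverse (2^m) * R * (real N + 1) * exp ?Z \<le> exp (- (real N * (\<rho> + 2 * \<epsilon>1))) * (R + 1) * (real N + 1) * exp ?Z"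
          unfolding u_def[symmetric] using uk u0 R_nonneg
          by (intro mult_right_mono mult_mono) auto
        also have "\<dots> = exp (- (real N * (\<rho> + 2 * \<epsilon>1)) + ln (R + 1) + ln (real N + 1) + ?Z)"
        proof -
          have r1: "exp (ln (R + 1)) = R + 1" using R_nonneg by simp
          have r2: "exp (ln (real N + 1)) = real N + 1" by simp
          show ?thesis by (simp only: exp_add r1 r2)
        qed
        also have "\<dots> \<le> exp (ln (\<tau> / 2) - \<epsilon>1 * real N)"
        proof (subst exp_le_cancel_iff)
          have i1: "real N * (\<rho> + 2 * \<epsilon>1) = real N * \<rho> + \<epsilon>1 * real N + \<epsilon>1 * real N"
            by (simp add: algebra_simps)
          show "- (real N * (\<rho> + 2 * \<epsilon>1)) + ln (R + 1) + ln (real N + 1) + ?Z \<le> ln (\<tau> / 2) - \<epsilon>1 * real N"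
            using E3 i1 by linarith
        qed
        also have "\<dots> = exp (ln (\<tau> / 2)) * exp (- (\<epsilon>1 * real N))" by (simp add: exp_add[symmetric])
        also have "\<dots> = \<tau> / 2 * exp (- (\<epsilon>1 * real N))" using \<tau> by simp
        also have "\<dots> \<le> \<tau> / 2 * mu N" using muN \<tau> by (intro mult_left_mono) auto
        finally show ?thesis unfolding \<rho>_def by simp
      qed
      have EB: "\<forall>n\<le>N. ee m n \<le> \<tau> * mu N / 2"
        by (rule core_A[OF \<alpha>(1) e1 \<tau>(1,2) CtR K0(2) Sb apos m1 muP mux fin])
      then have "m_min rd f Lb x N p \<le> m"
        by (intro check_le[OF m1 muP _ \<tau>_def]) (auto intro: mu_le)
      then show "m_min rd f Lb x N p \<le> nat \<lceil>real N * q0\<rceil>" unfolding m_def .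
    qed
    from ratio_ev[OF this q0] show "eventually (\<lambda>N. real (m_min rd f Lb x N p) / real N \<le> ll / ln 2 + \<epsilon>) sequentially" .
  qed
qed

end



theorem mainTheorem10:
  fixes a b :: real and f f' f'' :: "real \<Rightarrow> real"
    and rd :: "nat \<Rightarrow> real \<Rightarrow> real" and Lb :: "real \<Rightarrow> real \<Rightarrow> real"
    and Lmax K x :: real
  assumes ab: "a < b"
    and maps: "\<forall>y\<in>{a..b}. f y \<in> {a..b}"
    and d1: "\<forall>y\<in>{a..b}. (f has_real_derivative f' y) (at y within {a..b})"
    and d2: "\<forall>y\<in>{a..b}. (f' has_real_derivative f'' y) (at y within {a..b})"
    and d2cont: "continuous_on {a..b} f''"
    and d2bdd: "bounded (f'' ` {a..b})"
    and rd: "is_round_nearest rd"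
    and K: "K \<ge> 0" and Lmax: "Lmax \<ge> 0"
    and Lb: "\<forall>c\<in>{a..b}. \<forall>e\<ge>0. Lloc f' {a..b} c e \<le> Lb c e \<and>
               Lb c e \<le> min Lmax (Lloc f' {a..b} c e + K * e)"
    and xrat: "x \<in> \<rat>" and xD: "x \<in> {a..b}"
    and inD: "\<forall>m\<ge>1. \<forall>n. fst (comp_seq rd f Lb m x n) \<in> {a..b}"
    and nz: "\<forall>n. (f ^^ n) x \<noteq> 0"
    and minlim: "(\<lambda>N. log 2 (Min ((\<lambda>n. \<bar>(f ^^ n) x\<bar>) ` {0..N})) / real N) \<longlonglongrightarrow> 0"
    and lyap: "lyapunov_exists f f' x"
  shows "\<forall>\<epsilon>>0. \<exists>p0::int. \<forall>p\<ge>p0.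
           sigma rd f Lb x p \<le> max 0 (lambda_bar f f' x) / ereal (ln 2) + ereal \<epsilon>"
proof -
  interpret S: setting a b f f' f'' rd Lb Lmax K x
    using ab maps d1 d2 d2bdd rd K Lb xD inD by unfold_locales auto
  have apos: "\<forall>j. f' ((f ^^ j) x) \<noteq> 0" using lyap unfolding lyapunov_exists_def by blast
  obtain l where lim: "(\<lambda>n. (1 / real n) * (\<Sum>k<n. ln \<bar>f' ((f ^^ k) x)\<bar>)) \<longlonglongrightarrow> l"
    using lyap unfolding lyapunov_exists_def by blast
  define lb where "lb = lambda_bar f f' x"
  have lbf: "lb \<le> ereal (ln (max S.A 1))" unfolding lb_def by (rule S.lb_finite)
  have lnp: "ln (max S.A 1) \<ge> 0" by simp
  have "max 0 lb \<le> ereal (ln (max S.A 1))" using lbf lnp by (simp add: max_def)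
  then obtain ll where ll: "max 0 lb = ereal ll"
    by (cases "max 0 lb") auto
  have ll0: "ll \<ge> 0" using ll by (metis ereal_less_eq(5) max.cobounded1)
  have lbll: "lb \<le> ereal ll" using ll by (metis max.cobounded2)
  have tgt: "\<And>\<epsilon>. max 0 lb / ereal (ln 2) + ereal \<epsilon> = ereal (ll / ln 2 + \<epsilon>)"
    using ll by simp
  show ?thesis
  proof (intro allI impI)
    fix \<epsilon> :: real assume e: "\<epsilon> > 0"
    show "\<exists>p0::int. \<forall>p\<ge>p0. sigma rd f Lb x p \<le> max 0 (lambda_bar f f' x) / ereal (ln 2) + ereal \<epsilon>"
    proof (cases "l \<ge> 0")
      case True
      obtain p0 where p0: "\<forall>p\<ge>p0. eventually (\<lambda>N. real (m_min rd f Lb x N p) / real N \<le> ll / ln 2 + \<epsilon>) sequentially"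
        using S.case_pos[OF nz minlim apos lim True e ll0 lbll[unfolded lb_def]] by blast
      show ?thesis
      proof (intro exI[of _ p0] allI impI)
        fix p assume "p \<ge> p0"
        then have "sigma rd f Lb x p \<le> ereal (ll / ln 2 + \<epsilon>)" using p0 by (intro sigma_le) auto
        then show "sigma rd f Lb x p \<le> max 0 (lambda_bar f f' x) / ereal (ln 2) + ereal \<epsilon>"
          using tgt unfolding lb_def by simp
      qed
    next
      case False
      then have l: "l < 0" by simp
      show ?thesis
      proof (intro exI[of _ 0] allI impI)
        fix p :: int
        have "sigma rd f Lb x p \<le> ereal \<epsilon>"
          by (rule sigma_le[OF S.case_neg[OF nz minlim apos lim l e]])
        also have "ereal \<epsilon> \<le> ereal (ll / ln 2 + \<epsilon>)" using ll0 by simp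
        finally show "sigma rd f Lb x p \<le> max 0 (lambda_bar f f' x) / ereal (ln 2) + ereal \<epsilon>"
          using tgt unfolding lb_def by simp
      qed
    qed
  qed
qed


end
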